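(* Let $r\in(0,1)$, $k\geq1$ an integer, $\beta\in(0,1)$, and $\gamma, C$ real. Let $W_1,W_2,\dots$ be i.i.d.\ copies of a positive random variable $W$ (an i.i.d.\ multiplicative cascade with scale ratio $r$) whose scaling exponents, defined by $\mathbb{E}[W^p]=r^{\zeta_p}$, satisfy $\zeta_p=\gamma p+C(1-\beta^{p/k})$. Then the distribution of $W$ is uniquely determined by its moments. *)

theory Defs
  imports "HOL-Probability.Probability"
begin

definition determined_by_moments :: "real measure \<Rightarrow> bool" where
  "determined_by_moments \<mu> \<longleftrightarrow>
     (\<forall>\<nu>. prob_space \<nu> \<and> sets \<nu> = sets borel \<and>
          (\<forall>n::nat. integrable \<nu> (\<lambda>x. x ^ n) \<and>
                    (\<integral>x. x ^ n \<partial>\<nu>) = (\<integral>x. x ^ n \<partial>\<mu>))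
          \<longrightarrow> \<nu> = \<mu>)"

end

theory Submission
  imports Defs
begin

lemma fact_lim0: "(\<lambda>n. (x::real) ^ n / fact n) \<longlonglongrightarrow> 0"
proof -
  have "(\<lambda>n. inverse (fact n) * x ^ n) \<longlonglongrightarrow> 0"
    by (rule summable_LIMSEQ_zero[OF summable_exp])
  then show ?thesis by (simp add: field_simps)
qed

lemma abs_moment_bound:
  assumes "real_distribution \<mu>" "\<And>n. integrable \<mu> (\<lambda>x. x ^ n)"
  shows "(\<integral>x. \<bar>x\<bar> ^ n \<partial>\<mu>) \<le> 1 + (\<integral>x. x ^ (2*n) \<partial>\<mu>)"
proof -
  interpret real_distribution \<mu> by fact
  have pu: "prob UNIV = 1" by (metis prob_space space_eq_univ)
  have pw: "\<bar>x\<bar> ^ n \<le> 1 + x ^ (2*n)" for x :: real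
  proof (cases "\<bar>x\<bar> \<le> 1")
    case True
    then have "\<bar>x\<bar> ^ n \<le> 1" by (simp add: power_le_one)
    moreover have "x ^ (2*n) \<ge> 0" by (rule zero_le_even_power) simp
    ultimately show ?thesis by linarith
  next
    case False
    then have "\<bar>x\<bar> ^ n \<le> \<bar>x\<bar> ^ (2*n)" by (intro power_increasing) auto
    also have "\<dots> = x ^ (2*n)" by (rule power_even_abs) simp
    finally show ?thesis by linarith
  qed
  have "(\<integral>x. \<bar>x\<bar> ^ n \<partial>\<mu>) \<le> (\<integral>x. 1 + x ^ (2*n) \<partial>\<mu>)"
    using pw assms(2) unfolding power_abs[symmetric]
    by (intro integral_mono integrable_abs Bochner_Integration.integrable_add) auto
  also have "\<dots> = 1 + (\<integral>x. x ^ (2*n) \<partial>\<mu>)"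
    using assms(2) pu by (subst Bochner_Integration.integral_add) auto
  finally show ?thesis .
qed

lemma moment_det:
  assumes mu: "real_distribution \<mu>" and nu: "real_distribution \<nu>"
    and im: "\<And>n. integrable \<mu> (\<lambda>x. x ^ n)" and inu: "\<And>n. integrable \<nu> (\<lambda>x. x ^ n)"
    and eq: "\<And>n. (\<integral>x. x ^ n \<partial>\<nu>) = (\<integral>x. x ^ n \<partial>\<mu>)"
    and bd: "\<And>n. (\<integral>x. x ^ (2*n) \<partial>\<mu>) \<le> A * B ^ (2*n)" and A: "0 \<le> A"
  shows "\<nu> = \<mu>"
proof -
  have "char \<mu> = char \<nu>"
  proof
    fix t :: real
    define S :: "nat \<Rightarrow> complex" where "S n = (\<Sum>k \<le> n. ((\<i> * t)^k / fact k) * (\<integral>x. x^k \<partial>\<mu>))" for n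
    define b :: "nat \<Rightarrow> real" where "b n = 4 * (\<bar>t\<bar>^n / fact n) + 4 * A * ((\<bar>t\<bar> * B^2)^n / fact n)" for n
    have bd2: "cmod (char \<mu> t - char \<nu> t) \<le> b n" for n
    proof -
      have a1: "(\<integral>x. \<bar>x\<bar> ^ n \<partial>\<mu>) \<le> 1 + A * B ^ (2*n)"
        using abs_moment_bound[OF mu im, of n] bd[of n] by linarith
      have a2: "(\<integral>x. \<bar>x\<bar> ^ n \<partial>\<nu>) \<le> 1 + A * B ^ (2*n)"
        using abs_moment_bound[OF nu inu, of n] bd[of n] eq[of "2*n"] by linarith
      have c1: "cmod (char \<mu> t - S n) \<le> (2*\<bar>t\<bar>^n / fact n) * (\<integral>x. \<bar>x\<bar> ^ n \<partial>\<mu>)"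
        unfolding S_def by (rule real_distribution.char_approx1[OF mu im])
      have "S n = (\<Sum>k \<le> n. ((\<i> * t)^k / fact k) * (\<integral>x. x^k \<partial>\<nu>))"
        unfolding S_def using eq by simp
      then have c2: "cmod (char \<nu> t - S n) \<le> (2*\<bar>t\<bar>^n / fact n) * (\<integral>x. \<bar>x\<bar> ^ n \<partial>\<nu>)"
        by (simp only:) (rule real_distribution.char_approx1[OF nu inu])
      have nn: "0 \<le> 2*\<bar>t\<bar>^n / fact n" by simp
      have "cmod (char \<mu> t - char \<nu> t) \<le> cmod (char \<mu> t - S n) + cmod (char \<nu> t - S n)"
        by (metis norm_triangle_ineq4 norm_minus_commute diff_diff_eq2 add.commute diff_add_cancel)
      also have "\<dots> \<le> 2 * ((2*\<bar>t\<bar>^n / fact n) * (1 + A * B ^ (2*n)))"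
        using add_mono[OF order_trans[OF c1 mult_left_mono[OF a1 nn]] order_trans[OF c2 mult_left_mono[OF a2 nn]]]
        by simp
      also have "\<dots> = b n"
        unfolding b_def power_mult[of B 2 n] by (simp add: field_simps power_mult_distrib)
      finally show ?thesis .
    qed
    have "b \<longlonglongrightarrow> 4 * 0 + 4 * A * 0"
      unfolding b_def by (intro tendsto_intros fact_lim0)
    then have "cmod (char \<mu> t - char \<nu> t) \<le> 0"
      using bd2 by (intro LIMSEQ_le_const[of b]) auto
    then show "char \<mu> t = char \<nu> t" by simp
  qed
  then show ?thesis using Levy_uniqueness[OF mu nu] by simp
qed

theorem mainTheorem5:
  fixes M :: "'a measure" and W :: "'a \<Rightarrow> real"
    and r \<beta> \<gamma> C :: real and k :: nat
  assumes "prob_space M"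
    and "W \<in> borel_measurable M"
    and "AE \<omega> in M. W \<omega> > 0"
    and "0 < r" and "r < 1"
    and "1 \<le> k"
    and "0 < \<beta>" and "\<beta> < 1"
    and "\<forall>p::real. p > 0 \<longrightarrow>
           integrable M (\<lambda>\<omega>. W \<omega> powr p) \<and>
           (\<integral>\<omega>. W \<omega> powr p \<partial>M) = r powr (\<gamma> * p + C * (1 - \<beta> powr (p / real k)))"
  shows "determined_by_moments (distr M borel W)"
proof -
  interpret P: prob_space M by fact
  define \<mu> where "\<mu> = distr M borel W"
  have mu: "real_distribution \<mu>" unfolding \<mu>_def
    by (rule prob_space.real_distribution_distr) (use assms in auto)
  have ae: "AE \<omega> in M. W \<omega> ^ n = W \<omega> powr real n" if "n > 0" for n
    using assms(3) by eventually_elim (simp add: powr_realpow)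
  have iW: "integrable M (\<lambda>\<omega>. W \<omega> ^ n)" for n
  proof (cases "n = 0")
    case True then show ?thesis by simp
  next
    case False
    then show ?thesis using ae[of n] assms(9)[rule_format, of "real n"]
      by (subst integrable_cong_AE[where g="\<lambda>\<omega>. W \<omega> powr real n"]) (use assms(2) in auto)
  qed
  have im: "integrable \<mu> (\<lambda>x. x ^ n)" for n
    unfolding \<mu>_def using iW[of n] assms(2) by (subst integrable_distr_eq) auto
  have mom: "(\<integral>x. x ^ n \<partial>\<mu>) = (\<integral>\<omega>. W \<omega> ^ n \<partial>M)" for n
    unfolding \<mu>_def using assms(2) by (subst integral_distr) auto
  define A where "A = 1 + r powr (- \<bar>C\<bar>)"
  define B where "B = r powr \<gamma>"
  have bd: "(\<integral>x. x ^ (2*n) \<partial>\<mu>) \<le> A * B ^ (2*n)" for n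
  proof (cases "n = 0")
    case True then show ?thesis unfolding A_def using mu
      by (simp add: real_distribution.axioms(1) prob_space.prob_space)
  next
    case False
    define p where "p = real (2*n)"
    have p: "p > 0" using False unfolding p_def by simp
    have "(\<integral>x. x ^ (2*n) \<partial>\<mu>) = (\<integral>\<omega>. W \<omega> powr p \<partial>M)"
      unfolding mom p_def using ae[of "2*n"] False
      by (intro integral_cong_AE) (use assms(2) in auto)
    also have "\<dots> = r powr (\<gamma> * p + C * (1 - \<beta> powr (p / real k)))"
      using assms(9) p by auto
    also have "\<dots> = r powr (\<gamma> * p) * r powr (C * (1 - \<beta> powr (p / real k)))"
      by (simp add: powr_add)
    also have "\<dots> \<le> r powr (\<gamma> * p) * A"
    proof (rule mult_left_mono)
      show "0 \<le> r powr (\<gamma> * p)" by simp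
      have "0 < \<beta> powr (p / real k)" using assms(7) by simp
      moreover have "\<beta> powr (p / real k) \<le> 1"
        using assms(7,8) p assms(6) by (intro powr_le1) auto
      ultimately have "- \<bar>C\<bar> \<le> C * (1 - \<beta> powr (p / real k))"
        by (cases "C \<ge> 0") (auto simp: mult_nonneg_nonneg,
            smt (verit) mult_le_cancel_left1 mult_nonneg_nonneg)
      then have "r powr (C * (1 - \<beta> powr (p / real k))) \<le> r powr (- \<bar>C\<bar>)"
        using assms(4,5) by (intro powr_mono') auto
      then show "r powr (C * (1 - \<beta> powr (p / real k))) \<le> A" unfolding A_def by simp
    qed
    also have "r powr (\<gamma> * p) = B ^ (2*n)" unfolding B_def p_def
      using assms(4) by (simp add: powr_powr[symmetric] powr_realpow power_mult)
    finally show ?thesis by (simp add: mult.commute)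
  qed
  have A: "0 \<le> A" unfolding A_def by (simp add: add_nonneg_nonneg)
  show ?thesis
    unfolding determined_by_moments_def \<mu>_def[symmetric]
  proof (intro allI impI)
    fix \<nu> :: "real measure"
    assume h: "prob_space \<nu> \<and> sets \<nu> = sets borel \<and>
          (\<forall>n::nat. integrable \<nu> (\<lambda>x. x ^ n) \<and> (\<integral>x. x ^ n \<partial>\<nu>) = (\<integral>x. x ^ n \<partial>\<mu>))"
    have nu: "real_distribution \<nu>" using h by (simp add: real_distribution_def real_distribution_axioms_def)
    show "\<nu> = \<mu>"
      by (rule moment_det[OF mu nu im _ _ bd A]) (use h in auto)
  qed
qed

end
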